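(* Let $\mathcal{M}=(N,\mathcal{I})$ be a matroid, $f:2^N\to\mathbb{R}$ a normalized submodular function, $\varepsilon\in(0,1)$, $\beta\ge0$. Let $I_1,\dots,I_k,S_1,\dots,S_k$ be random subsets of $N$; write $U_i=S_1\cup\dots\cup S_i$ and $V_i=I_1\cup\dots\cup I_i$ ($U_0=V_0=\emptyset$). Suppose: (a) for each $i$, almost surely $I_i\subseteq S_i\subseteq N\setminus\mathrm{span}(U_{i-1})$, $I_i$ is independent in $\mathcal{M}/U_{i-1}$, and, conditioned on $(I_j,S_j)_{j<i}$, $\mathbb{E}[f_{U_{i-1}}(I_i)]\ge(1-\varepsilon)\,\mathbb{E}[|S_i|]\cdot\max\{0,\max_{e\in N\setminus\mathrm{span}(U_{i-1})}f_{U_{i-1}}(e)\}$; (b) almost surely $f_{U_k}(T\setminus\mathrm{span}(U_k))\le\beta$ for all $T\in\mathcal{I}$. Then (i) $\mathbb{E}[f(V_k)]\ge(1-\varepsilon)\mathbb{E}[f(U_k)]$; and (ii) for every fixed $T\in\mathcal{I}$ there is a partition $T=T_1\cup\dots\cup T_{k+1}$, with each $T_i$ a deterministic function of $S_1,\dots,S_k$, such that $T_i\cap\mathrm{span}(U_{i-1})=\emptyset$ for each $i$, and $\mathbb{E}[f(V_k)]\ge(1-\varepsilon)\sum_{i=1}^{k+1}\mathbb{E}[f_{U_{i-1}}(T_i)]-(1-\varepsilon)\beta$.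
   Context: $f$ normalized: $f(\emptyset)=0$; submodular: $f(A)+f(B)\ge f(A\cup B)+f(A\cap B)$. $f_U(A)=f(U\cup A)-f(U)$. $\mathrm{span}(S)=\{e:\mathrm{rank}(S\cup\{e\})=\mathrm{rank}(S)\}$. The contraction $\mathcal{M}/U$ has ground set $N\setminus\mathrm{span}(U)$, and $A$ is independent in it iff $\mathrm{rank}(A\cup U)-\mathrm{rank}(U)=|A|$. *)

theory Defs
  imports "HOL-Probability.Probability_Mass_Function"
begin

definition matroid :: "'a set \<Rightarrow> 'a set set \<Rightarrow> bool" where
  "matroid N Ind \<longleftrightarrow> finite N \<and> Ind \<subseteq> Pow N \<and> {} \<in> Ind \<and>
     (\<forall>A B. A \<in> Ind \<and> B \<subseteq> A \<longrightarrow> B \<in> Ind) \<and>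
     (\<forall>A B. A \<in> Ind \<and> B \<in> Ind \<and> card A < card B \<longrightarrow> (\<exists>e\<in>B - A. insert e A \<in> Ind))"

definition mrank :: "'a set set \<Rightarrow> 'a set \<Rightarrow> nat" where
  "mrank Ind X = Max (card ` {A. A \<subseteq> X \<and> A \<in> Ind})"

definition mspan :: "'a set \<Rightarrow> 'a set set \<Rightarrow> 'a set \<Rightarrow> 'a set" where
  "mspan N Ind S = {e \<in> N. mrank Ind (S \<union> {e}) = mrank Ind S}"

text \<open>Independence in the contraction M/U (ground set N - span U).\<close>
definition contr_indep :: "'a set \<Rightarrow> 'a set set \<Rightarrow> 'a set \<Rightarrow> 'a set \<Rightarrow> bool" where
  "contr_indep N Ind U A \<longleftrightarrow> A \<subseteq> N - mspan N Ind U \<and>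
     mrank Ind (A \<union> U) = mrank Ind U + card A"

definition normalized :: "('a set \<Rightarrow> real) \<Rightarrow> bool" where
  "normalized f \<longleftrightarrow> f {} = 0"

definition submodular :: "'a set \<Rightarrow> ('a set \<Rightarrow> real) \<Rightarrow> bool" where
  "submodular N f \<longleftrightarrow> (\<forall>A B. A \<subseteq> N \<and> B \<subseteq> N \<longrightarrow> f A + f B \<ge> f (A \<union> B) + f (A \<inter> B))"

definition marg :: "('a set \<Rightarrow> real) \<Rightarrow> 'a set \<Rightarrow> 'a set \<Rightarrow> real" where
  "marg f U A = f (U \<union> A) - f U"

definition pref_union :: "(nat \<Rightarrow> 'b \<Rightarrow> 'a set) \<Rightarrow> nat \<Rightarrow> 'b \<Rightarrow> 'a set" where
  "pref_union X i \<omega> = (\<Union>j\<in>{1..i}. X j \<omega>)"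

definition hist_event :: "(nat \<Rightarrow> 'b \<Rightarrow> 'a set) \<Rightarrow> (nat \<Rightarrow> 'b \<Rightarrow> 'a set) \<Rightarrow> nat \<Rightarrow> 'b \<Rightarrow> 'b set" where
  "hist_event I S i \<omega>0 = {\<omega>. \<forall>j\<in>{1..<i}. I j \<omega> = I j \<omega>0 \<and> S j \<omega> = S j \<omega>0}"

definition best_marg :: "'a set \<Rightarrow> 'a set set \<Rightarrow> ('a set \<Rightarrow> real) \<Rightarrow> 'a set \<Rightarrow> real" where
  "best_marg N Ind f U = Max (insert 0 ((\<lambda>e. marg f U {e}) ` (N - mspan N Ind U)))"

end

theory Submission
  imports Defs
begin


lemma int_pmf:
  fixes g :: "'b \<Rightarrow> real"
  assumes "\<And>\<omega>. \<omega> \<in> set_pmf p \<Longrightarrow> \<bar>g \<omega>\<bar> \<le> B"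
  shows "integrable (measure_pmf p) g"
  by (rule measure_pmf.integrable_const_bound[where B=B]) (auto simp: AE_measure_pmf_iff assms)

lemma exp_bound:
  fixes g :: "'b \<Rightarrow> real"
  assumes "\<And>\<omega>. \<omega> \<in> set_pmf p \<Longrightarrow> \<bar>g \<omega>\<bar> \<le> B"
  shows "\<bar>measure_pmf.expectation p g\<bar> \<le> B"
proof -
  have "\<bar>measure_pmf.expectation p g\<bar> \<le> measure_pmf.expectation p (\<lambda>x. \<bar>g x\<bar>)"
    by (rule integral_abs_bound)
  also have "\<dots> \<le> measure_pmf.expectation p (\<lambda>x. B)"
    by (rule integral_mono_AE) (auto intro!: int_pmf[where B=B] simp: AE_measure_pmf_iff assms)
  finally show ?thesis by simp
qed

lemma tower:
  fixes g :: "'b \<Rightarrow> real"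
  assumes bnd: "\<And>\<omega>. \<omega> \<in> set_pmf p \<Longrightarrow> \<bar>g \<omega>\<bar> \<le> B"
    and refl: "\<And>x. R x x" and sym: "\<And>x y. R x y \<Longrightarrow> R y x"
    and trans: "\<And>x y z. R x y \<Longrightarrow> R y z \<Longrightarrow> R x z"
  shows "measure_pmf.expectation p g =
     measure_pmf.expectation p (\<lambda>x. measure_pmf.expectation (cond_pmf p {y. R x y}) g)"
proof -
  define g' where "g' = (\<lambda>\<omega>. if \<omega> \<in> set_pmf p then g \<omega> else 0)"
  have B0: "0 \<le> B" using bnd set_pmf_not_empty[of p] by fastforce
  have eq: "bind_pmf p (\<lambda>x. cond_pmf p {y. R x y}) = p"
  proof (rule bind_cond_pmf_cancel)
    fix x y assume "R x y"
    then have "{y. R x y} = {x. R x y}" using sym trans by blast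
    then show "measure_pmf.prob p {y. R x y} = measure_pmf.prob p {x. R x y}" by simp
  qed (use refl in auto)
  have "measure_pmf.expectation p g = measure_pmf.expectation p g'"
    by (rule integral_cong_AE) (auto simp: AE_measure_pmf_iff g'_def)
  also have "\<dots> = measure_pmf.expectation (bind_pmf p (\<lambda>x. cond_pmf p {y. R x y})) g'"
    by (simp add: eq)
  also have "\<dots> = measure_pmf.expectation p (\<lambda>x. measure_pmf.expectation (cond_pmf p {y. R x y}) g')"
    unfolding measure_pmf_bind
    by (rule integral_bind[where K="count_space UNIV" and B=B and B'=1])
       (auto simp: g'_def bnd B0 measure_pmf.prob_space_axioms prob_space.finite_measure
          measure_pmf.emeasure_space_1 measure_pmf_in_subprob_space)
  also have "\<dots> = measure_pmf.expectation p (\<lambda>x. measure_pmf.expectation (cond_pmf p {y. R x y}) g)"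
  proof (rule integral_cong_AE)
    show "AE x in measure_pmf p. measure_pmf.expectation (cond_pmf p {y. R x y}) g' =
          measure_pmf.expectation (cond_pmf p {y. R x y}) g"
    proof (unfold AE_measure_pmf_iff, intro ballI)
      fix x assume x: "x \<in> set_pmf p"
      have ne: "set_pmf p \<inter> {y. R x y} \<noteq> {}" using x refl by auto
      show "measure_pmf.expectation (cond_pmf p {y. R x y}) g' =
          measure_pmf.expectation (cond_pmf p {y. R x y}) g"
        by (rule integral_cong_AE) (auto simp: AE_measure_pmf_iff g'_def set_cond_pmf[OF ne])
    qed
  qed auto
  finally show ?thesis .
qed


lemma indep_fin: "matroid N Ind \<Longrightarrow> finite {A. A \<subseteq> X \<and> A \<in> Ind}"
  unfolding matroid_def by (metis (no_types, lifting) Collect_mem_eq Collect_mono_iff Pow_def finite_Pow_iff rev_finite_subset)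

lemma indep_finite: "matroid N Ind \<Longrightarrow> A \<in> Ind \<Longrightarrow> finite A"
  unfolding matroid_def by (meson PowD finite_subset subsetD)

lemma mrank_ge: "matroid N Ind \<Longrightarrow> A \<subseteq> X \<Longrightarrow> A \<in> Ind \<Longrightarrow> card A \<le> mrank Ind X"
  unfolding mrank_def by (rule Max_ge) (auto simp: indep_fin)

lemma mrank_ex: "matroid N Ind \<Longrightarrow> \<exists>A. A \<subseteq> X \<and> A \<in> Ind \<and> card A = mrank Ind X"
proof -
  assume M: "matroid N Ind"
  have "{} \<in> {A. A \<subseteq> X \<and> A \<in> Ind}" using M unfolding matroid_def by auto
  then have "Max (card ` {A. A \<subseteq> X \<and> A \<in> Ind}) \<in> card ` {A. A \<subseteq> X \<and> A \<in> Ind}"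
    by (intro Max_in) (auto simp: indep_fin[OF M])
  then show ?thesis unfolding mrank_def by auto
qed

lemma mrank_le_card: "matroid N Ind \<Longrightarrow> finite X \<Longrightarrow> mrank Ind X \<le> card X"
  using mrank_ex card_mono by metis

lemma indep_sub: "matroid N Ind \<Longrightarrow> A \<in> Ind \<Longrightarrow> B \<subseteq> A \<Longrightarrow> B \<in> Ind"
  unfolding matroid_def by blast

lemma augment: "matroid N Ind \<Longrightarrow> A \<in> Ind \<Longrightarrow> B \<in> Ind \<Longrightarrow> card A < card B \<Longrightarrow> \<exists>e\<in>B - A. insert e A \<in> Ind"
  unfolding matroid_def by blast

lemma indep_in_span:
  assumes M: "matroid N Ind" and A: "A \<in> Ind" "A \<subseteq> mspan N Ind X"
  shows "card A \<le> mrank Ind X"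
proof (rule ccontr)
  assume "\<not> ?thesis"
  obtain B where B: "B \<subseteq> X" "B \<in> Ind" "card B = mrank Ind X" using mrank_ex[OF M] by blast
  with \<open>\<not> ?thesis\<close> have "card B < card A" by simp
  then obtain e where e: "e \<in> A - B" "insert e B \<in> Ind" using augment[OF M B(2) A(1)] by blast
  have fB: "finite B" using indep_finite[OF M B(2)] .
  have "e \<in> mspan N Ind X" using e A by auto
  then have r: "mrank Ind (X \<union> {e}) = mrank Ind X" unfolding mspan_def by auto
  have "card (insert e B) \<le> mrank Ind (X \<union> {e})"
    by (rule mrank_ge[OF M _ e(2)]) (use B in auto)
  moreover have "card (insert e B) = card B + 1" using e fB by auto
  ultimately show False using r B by simp
qed

lemma loop_free: "matroid N Ind \<Longrightarrow> T \<in> Ind \<Longrightarrow> x \<in> T \<Longrightarrow> x \<notin> mspan N Ind {}"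
proof
  assume M: "matroid N Ind" and T: "T \<in> Ind" "x \<in> T" and x: "x \<in> mspan N Ind {}"
  have "{x} \<in> Ind" using indep_sub[OF M T(1)] T(2) by auto
  have "card {x} \<le> mrank Ind {} "
    using indep_in_span[OF M \<open>{x} \<in> Ind\<close>] x by auto
  moreover have "mrank Ind {} = 0" unfolding mrank_def using M unfolding matroid_def by auto
  ultimately show False by simp
qed

lemma sub_span: "X \<subseteq> N \<Longrightarrow> X \<subseteq> mspan N Ind X"
  unfolding mspan_def by (auto simp: insert_absorb)

lemma mrank_mono: "matroid N Ind \<Longrightarrow> X \<subseteq> Y \<Longrightarrow> mrank Ind X \<le> mrank Ind Y"
  using mrank_ex mrank_ge by (metis subset_trans)

lemma span_mono:
  assumes M: "matroid N Ind" and XY: "X \<subseteq> Y"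
  shows "mspan N Ind X \<subseteq> mspan N Ind Y"
proof
  fix e assume "e \<in> mspan N Ind X"
  then have eN: "e \<in> N" and rX: "mrank Ind (X \<union> {e}) = mrank Ind X" unfolding mspan_def by auto
  show "e \<in> mspan N Ind Y"
  proof (rule ccontr)
    assume ne: "e \<notin> mspan N Ind Y"
    have ge: "mrank Ind Y \<le> mrank Ind (Y \<union> {e})" by (rule mrank_mono[OF M]) auto
    with ne eN have lt: "mrank Ind Y < mrank Ind (Y \<union> {e})" unfolding mspan_def by auto
    then have eY: "e \<notin> Y" by (metis insert_absorb Un_insert_right sup_bot.right_neutral less_irrefl)
    obtain BX where BX: "BX \<subseteq> X" "BX \<in> Ind" "card BX = mrank Ind X" using mrank_ex[OF M] by blast
    define F where "F = {C. C \<in> Ind \<and> BX \<subseteq> C \<and> C \<subseteq> Y}"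
    have fF: "finite F" unfolding F_def
      by (rule finite_subset[OF _ indep_fin[OF M, of Y]]) auto
    have "BX \<in> F" unfolding F_def using BX XY by auto
    then have "Max (card ` F) \<in> card ` F" using fF by (intro Max_in) auto
    then obtain B where BF: "B \<in> F" and Bmax: "card B = Max (card ` F)" by auto
    have Bm: "\<And>C. C \<in> F \<Longrightarrow> card C \<le> card B" using Bmax fF by simp
    have B: "B \<in> Ind" "BX \<subseteq> B" "B \<subseteq> Y" using BF unfolding F_def by auto
    have incl: "\<And>x. x \<in> Y - B \<Longrightarrow> insert x B \<notin> Ind"
    proof
      fix x assume x: "x \<in> Y - B" "insert x B \<in> Ind"
      then have "insert x B \<in> F" using B unfolding F_def by auto
      moreover have "card (insert x B) = card B + 1" using x indep_finite[OF M B(1)] by auto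
      ultimately show False using Bm by fastforce
    qed
    have cB: "card B = mrank Ind Y"
    proof (rule ccontr)
      assume "card B \<noteq> mrank Ind Y"
      moreover have "card B \<le> mrank Ind Y" using mrank_ge[OF M B(3) B(1)] .
      ultimately have "card B < mrank Ind Y" by simp
      obtain D where D: "D \<subseteq> Y" "D \<in> Ind" "card D = mrank Ind Y" using mrank_ex[OF M] by blast
      obtain x where "x \<in> D - B" "insert x B \<in> Ind"
        using augment[OF M B(1) D(2)] \<open>card B < mrank Ind Y\<close> D by auto
      then show False using incl D by auto
    qed
    obtain D where D: "D \<subseteq> Y \<union> {e}" "D \<in> Ind" "card D = mrank Ind (Y \<union> {e})"
      using mrank_ex[OF M] by blast
    obtain x where x: "x \<in> D - B" "insert x B \<in> Ind"
      using augment[OF M B(1) D(2)] lt cB D by auto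
    have "x = e" using x incl D by auto
    then have "insert e BX \<in> Ind" using indep_sub[OF M x(2)] B by (metis insert_mono)
    then have "card (insert e BX) \<le> mrank Ind (X \<union> {e})"
      by (intro mrank_ge[OF M]) (use BX in auto)
    moreover have "e \<notin> BX" using eY BX XY by auto
    then have "card (insert e BX) = card BX + 1"
      using indep_finite[OF M BX(2)] by simp
    ultimately show False using rX BX by simp
  qed
qed


lemma dimret:
  assumes sub: "submodular N f" and XY: "X \<subseteq> Y" "Y \<subseteq> N" and A: "A \<subseteq> N" "A \<inter> Y = {}"
  shows "marg f Y A \<le> marg f X A"
proof -
  have "f (X \<union> A) + f Y \<ge> f ((X \<union> A) \<union> Y) + f ((X \<union> A) \<inter> Y)"
    using sub XY A unfolding submodular_def by (meson Un_subset_iff subset_trans)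
  moreover have "(X \<union> A) \<union> Y = Y \<union> A" "(X \<union> A) \<inter> Y = X" using XY A by auto
  ultimately show ?thesis unfolding marg_def by simp
qed

lemma marg_subadd:
  assumes sub: "submodular N f" and U: "U \<subseteq> N" and A: "finite A" "A \<subseteq> N"
  shows "marg f U A \<le> (\<Sum>e\<in>A. marg f U {e})"
  using A
proof (induction A rule: finite_induct)
  case empty then show ?case by (simp add: marg_def)
next
  case (insert e A)
  have "f (U \<union> A) + f (U \<union> {e}) \<ge> f ((U \<union> A) \<union> (U \<union> {e})) + f ((U \<union> A) \<inter> (U \<union> {e}))"
    using sub U insert.prems unfolding submodular_def by (metis Un_subset_iff insert_subset empty_subsetI)
  moreover have "(U \<union> A) \<union> (U \<union> {e}) = U \<union> insert e A" "(U \<union> A) \<inter> (U \<union> {e}) = U"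
    using insert.hyps by auto
  ultimately have "marg f U (insert e A) \<le> marg f U A + marg f U {e}"
    unfolding marg_def by simp
  then show ?case using insert by simp
qed

lemma best_ge0: "matroid N Ind \<Longrightarrow> 0 \<le> best_marg N Ind f U"
  unfolding best_marg_def matroid_def by (auto intro: Max_ge)

lemma best_ge: "matroid N Ind \<Longrightarrow> e \<in> N - mspan N Ind U \<Longrightarrow> marg f U {e} \<le> best_marg N Ind f U"
  unfolding best_marg_def matroid_def by (auto intro: Max_ge)

lemma marg_le_best:
  assumes M: "matroid N Ind" and sub: "submodular N f" and U: "U \<subseteq> N" and A: "A \<subseteq> N - mspan N Ind U"
  shows "marg f U A \<le> real (card A) * best_marg N Ind f U"
proof -
  have fA: "finite A" using A M unfolding matroid_def by (meson Diff_subset finite_subset)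
  have "marg f U A \<le> (\<Sum>e\<in>A. marg f U {e})"
    using marg_subadd[OF sub U fA] A by auto
  also have "\<dots> \<le> (\<Sum>e\<in>A. best_marg N Ind f U)"
    by (rule sum_mono) (use A best_ge[OF M] in auto)
  finally show ?thesis by simp
qed

lemma best_mono:
  assumes M: "matroid N Ind" and sub: "submodular N f" and XY: "X \<subseteq> Y" "Y \<subseteq> N"
  shows "best_marg N Ind f Y \<le> best_marg N Ind f X"
proof -
  have fin: "finite (N - mspan N Ind Y)" using M unfolding matroid_def by auto
  show ?thesis
    unfolding best_marg_def[of N Ind f Y]
  proof (subst Max_le_iff, goal_cases)
    case 3
    show ?case
    proof
      fix a assume "a \<in> insert 0 ((\<lambda>e. marg f Y {e}) ` (N - mspan N Ind Y))"
      then consider "a = 0" | e where "e \<in> N - mspan N Ind Y" "a = marg f Y {e}" by auto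
      then show "a \<le> best_marg N Ind f X"
      proof cases
        case 1 then show ?thesis using best_ge0[OF M] by simp
      next
        case 2
        have "e \<in> N - mspan N Ind X" using 2 span_mono[OF M XY(1)] by auto
        moreover have "marg f Y {e} \<le> marg f X {e}"
          using dimret[OF sub XY, of "{e}"] 2 sub_span[OF XY(2), of Ind] by auto
        ultimately show ?thesis using 2 best_ge[OF M, of e X f] by linarith
      qed
    qed
  qed (use fin in auto)
qed

lemma pref_union_Suc: "pref_union X (Suc n) \<omega> = pref_union X n \<omega> \<union> X (Suc n) \<omega>"
  unfolding pref_union_def by (auto simp: atLeastAtMostSuc_conv)

lemma pref_union_0[simp]: "pref_union X 0 \<omega> = {}"
  unfolding pref_union_def by auto

lemma telescope:
  assumes "f {} = 0"
  shows "f (pref_union X n \<omega>) = (\<Sum>i=1..n. marg f (pref_union X (i - 1) \<omega>) (X i \<omega>))"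
proof (induction n)
  case 0 then show ?case using assms by simp
next
  case (Suc n)
  then show ?case by (simp add: pref_union_Suc marg_def)
qed

lemma abel:
  fixes t s b :: "nat \<Rightarrow> real"
  assumes pre: "\<And>m. m \<le> k \<Longrightarrow> (\<Sum>i=1..m. t i) \<le> (\<Sum>i=1..m. s i)"
    and mono: "\<And>i. 1 \<le> i \<Longrightarrow> i < k \<Longrightarrow> b (Suc i) \<le> b i"
    and nn: "\<And>i. 1 \<le> i \<Longrightarrow> i \<le> k \<Longrightarrow> 0 \<le> b i"
  shows "(\<Sum>i=1..k. t i * b i) \<le> (\<Sum>i=1..k. s i * b i)"
proof -
  have *: "m \<le> k \<Longrightarrow> (\<Sum>i=1..m. (s i - t i) * b i) \<ge> (\<Sum>i=1..m. (s i - t i)) * b m" for m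
  proof (induction m)
    case 0 then show ?case by simp
  next
    case (Suc m)
    have P: "0 \<le> (\<Sum>i=1..m. (s i - t i))" using pre[of m] Suc.prems by (simp add: sum_subtractf)
    have "(\<Sum>i=1..m. (s i - t i)) * b (Suc m) \<le> (\<Sum>i=1..m. (s i - t i)) * b m"
    proof (cases "m = 0")
      case False
      then show ?thesis using P mono[of m] Suc.prems by (simp add: mult_left_mono)
    qed simp
    then show ?case using Suc by (simp add: algebra_simps)
  qed
  have "0 \<le> (\<Sum>i=1..k. (s i - t i)) * b k"
  proof (cases "k = 0")
    case False
    then show ?thesis using pre[of k] nn[of k] by (simp add: sum_subtractf)
  qed simp
  with *[of k] have "0 \<le> (\<Sum>i=1..k. (s i - t i) * b i)" by simp
  then show ?thesis by (simp add: algebra_simps sum_subtractf)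
qed


theorem mainTheorem6:
  fixes N :: "'a set" and Ind :: "'a set set" and f :: "'a set \<Rightarrow> real"
    and \<epsilon> \<beta> :: real and k :: nat
    and p :: "'b pmf" and I S :: "nat \<Rightarrow> 'b \<Rightarrow> 'a set"
  assumes M: "matroid N Ind"
    and f_norm: "normalized f" and f_sub: "submodular N f"
    and eps: "0 < \<epsilon>" "\<epsilon> < 1" and beta: "0 \<le> \<beta>"
    and a_as: "\<And>i \<omega>. i \<in> {1..k} \<Longrightarrow> \<omega> \<in> set_pmf p \<Longrightarrow>
        I i \<omega> \<subseteq> S i \<omega> \<and> S i \<omega> \<subseteq> N - mspan N Ind (pref_union S (i - 1) \<omega>) \<and>
        contr_indep N Ind (pref_union S (i - 1) \<omega>) (I i \<omega>)"
    and a_exp: "\<And>i \<omega>0. i \<in> {1..k} \<Longrightarrow> \<omega>0 \<in> set_pmf p \<Longrightarrow>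
        measure_pmf.expectation (cond_pmf p (hist_event I S i \<omega>0))
          (\<lambda>\<omega>. marg f (pref_union S (i - 1) \<omega>) (I i \<omega>))
        \<ge> (1 - \<epsilon>) * measure_pmf.expectation (cond_pmf p (hist_event I S i \<omega>0))
              (\<lambda>\<omega>. real (card (S i \<omega>)))
            * best_marg N Ind f (pref_union S (i - 1) \<omega>0)"
    and b: "\<And>\<omega> T. \<omega> \<in> set_pmf p \<Longrightarrow> T \<in> Ind \<Longrightarrow>
        marg f (pref_union S k \<omega>) (T - mspan N Ind (pref_union S k \<omega>)) \<le> \<beta>"
  shows "(measure_pmf.expectation p (\<lambda>\<omega>. f (pref_union I k \<omega>))
           \<ge> (1 - \<epsilon>) * measure_pmf.expectation p (\<lambda>\<omega>. f (pref_union S k \<omega>))) \<and>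
         (\<forall>T \<in> Ind. \<exists>Tp :: nat \<Rightarrow> 'a set list \<Rightarrow> 'a set.
           (\<forall>\<omega> \<in> set_pmf p.
              let Ts = (\<lambda>i. Tp i (map (\<lambda>j. S j \<omega>) [1..<k+1])) in
              (\<Union>i\<in>{1..k+1}. Ts i) = T \<and> disjoint_family_on Ts {1..k+1} \<and>
              (\<forall>i\<in>{1..k+1}. Ts i \<inter> mspan N Ind (pref_union S (i - 1) \<omega>) = {})) \<and>
           measure_pmf.expectation p (\<lambda>\<omega>. f (pref_union I k \<omega>))
             \<ge> (1 - \<epsilon>) * (\<Sum>i=1..k+1. measure_pmf.expectation p
                   (\<lambda>\<omega>. marg f (pref_union S (i - 1) \<omega>) (Tp i (map (\<lambda>j. S j \<omega>) [1..<k+1]))))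
               - (1 - \<epsilon>) * \<beta>)"
  proof -
  have finN: "finite N" using M unfolding matroid_def by auto
  have TN: "\<And>T. T \<in> Ind \<Longrightarrow> T \<subseteq> N" using M unfolding matroid_def by auto
  define Bf where "Bf = (\<Sum>X\<in>Pow N. \<bar>f X\<bar>)"
  have fB: "\<And>X. X \<subseteq> N \<Longrightarrow> \<bar>f X\<bar> \<le> Bf"
    unfolding Bf_def by (rule member_le_sum) (auto simp: finN)
  have Bf0: "0 \<le> Bf" using fB[of "{}"] by simp
  have margB: "\<And>U A. U \<subseteq> N \<Longrightarrow> A \<subseteq> N \<Longrightarrow> \<bar>marg f U A\<bar> \<le> 2 * Bf"
    unfolding marg_def using fB by (smt (verit) Un_subset_iff)
  have bestB: "\<And>U. U \<subseteq> N \<Longrightarrow> best_marg N Ind f U \<le> 2 * Bf"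
    unfolding best_marg_def
  proof (subst Max_le_iff)
    fix U assume U: "U \<subseteq> N"
    show "\<forall>a\<in>insert 0 ((\<lambda>e. marg f U {e}) ` (N - mspan N Ind U)). a \<le> 2 * Bf"
    proof
      fix a assume "a \<in> insert 0 ((\<lambda>e. marg f U {e}) ` (N - mspan N Ind U))"
      then show "a \<le> 2 * Bf" using Bf0 margB[OF U, of "{_}"] by (auto dest!: abs_le_D1)
    qed
  qed (use finN in auto)
  have SN: "\<And>i \<omega>. i \<in> {1..k} \<Longrightarrow> \<omega> \<in> set_pmf p \<Longrightarrow>
      S i \<omega> \<subseteq> N - mspan N Ind (pref_union S (i - 1) \<omega>)" using a_as by blast
  have IS: "\<And>i \<omega>. i \<in> {1..k} \<Longrightarrow> \<omega> \<in> set_pmf p \<Longrightarrow> I i \<omega> \<subseteq> S i \<omega>" using a_as by blast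
  have UN: "\<And>j \<omega>. j \<le> k \<Longrightarrow> \<omega> \<in> set_pmf p \<Longrightarrow> pref_union S j \<omega> \<subseteq> N"
    unfolding pref_union_def using SN by fastforce
  have VU: "\<And>j \<omega>. j \<le> k \<Longrightarrow> \<omega> \<in> set_pmf p \<Longrightarrow> pref_union I j \<omega> \<subseteq> pref_union S j \<omega>"
    unfolding pref_union_def using IS by fastforce
  have Umono: "\<And>i j \<omega>. i \<le> j \<Longrightarrow> pref_union S i \<omega> \<subseteq> pref_union S j \<omega>"
    unfolding pref_union_def by (rule UN_mono) auto
  define gI where "gI = (\<lambda>i \<omega>. marg f (pref_union S (i - 1) \<omega>) (I i \<omega>))"
  define b where "b = (\<lambda>i \<omega>. best_marg N Ind f (pref_union S (i - 1) \<omega>))"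
  define sb where "sb = (\<lambda>i \<omega>. real (card (S i \<omega>)) * b i \<omega>)"
  have gIB: "\<And>i \<omega>. i \<in> {1..k} \<Longrightarrow> \<omega> \<in> set_pmf p \<Longrightarrow> \<bar>gI i \<omega>\<bar> \<le> 2 * Bf"
  proof -
    fix i \<omega> assume a: "i \<in> {1..k}" "\<omega> \<in> set_pmf p"
    have "i - 1 \<le> k" using a(1) by auto
    then have "pref_union S (i - 1) \<omega> \<subseteq> N" using UN[OF _ a(2)] by blast
    moreover have "I i \<omega> \<subseteq> N" using IS[OF a] SN[OF a] by blast
    ultimately show "\<bar>gI i \<omega>\<bar> \<le> 2 * Bf" unfolding gI_def by (rule margB)
  qed
  have bB: "\<And>i \<omega>. i \<in> {1..k} \<Longrightarrow> \<omega> \<in> set_pmf p \<Longrightarrow> 0 \<le> b i \<omega> \<and> b i \<omega> \<le> 2 * Bf"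
  proof -
    fix i \<omega> assume a: "i \<in> {1..k}" "\<omega> \<in> set_pmf p"
    have "i - 1 \<le> k" using a(1) by auto
    then have "pref_union S (i - 1) \<omega> \<subseteq> N" using UN[OF _ a(2)] by blast
    then show "0 \<le> b i \<omega> \<and> b i \<omega> \<le> 2 * Bf" unfolding b_def using bestB best_ge0[OF M] by blast
  qed
  have cS: "\<And>i \<omega>. i \<in> {1..k} \<Longrightarrow> \<omega> \<in> set_pmf p \<Longrightarrow> card (S i \<omega>) \<le> card N"
    using SN finN by (metis Diff_subset card_mono subset_trans)
  have sbB: "\<And>i \<omega>. i \<in> {1..k} \<Longrightarrow> \<omega> \<in> set_pmf p \<Longrightarrow> \<bar>sb i \<omega>\<bar> \<le> real (card N) * (2 * Bf)"
  proof -
    fix i \<omega> assume a: "i \<in> {1..k}" "\<omega> \<in> set_pmf p"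
    have "\<bar>sb i \<omega>\<bar> = real (card (S i \<omega>)) * b i \<omega>" unfolding sb_def using bB[OF a] by simp
    also have "\<dots> \<le> real (card N) * (2 * Bf)"
      using bB[OF a] cS[OF a] by (intro mult_mono) auto
    finally show "\<bar>sb i \<omega>\<bar> \<le> real (card N) * (2 * Bf)" .
  qed
  have K: "\<And>i. i \<in> {1..k} \<Longrightarrow> measure_pmf.expectation p (gI i) \<ge> (1 - \<epsilon>) * measure_pmf.expectation p (sb i)"
  proof -
    fix i assume i: "i \<in> {1..k}"
    define R where "R = (\<lambda>x y. \<forall>j\<in>{1..<i}. I j y = I j x \<and> S j y = S j x)"
    have hist: "\<And>x. hist_event I S i x = {y. R x y}" unfolding hist_event_def R_def by simp
    have Rr: "\<And>x. R x x" "\<And>x y. R x y \<Longrightarrow> R y x" "\<And>x y z. R x y \<Longrightarrow> R y z \<Longrightarrow> R x z"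
      unfolding R_def by auto
    define c where "c = (\<lambda>x. cond_pmf p {y. R x y})"
    have setc: "\<And>x. x \<in> set_pmf p \<Longrightarrow> set_pmf (c x) = set_pmf p \<inter> {y. R x y}"
      unfolding c_def using Rr(1) by (intro set_cond_pmf) auto
    have Ueq: "\<And>x y. R x y \<Longrightarrow> pref_union S (i - 1) y = pref_union S (i - 1) x"
    proof -
      fix x y assume "R x y"
      then have "\<And>j. j \<in> {1..i - 1} \<Longrightarrow> S j y = S j x" unfolding R_def using i by auto
      then show "pref_union S (i - 1) y = pref_union S (i - 1) x"
        unfolding pref_union_def by (rule SUP_cong[OF refl]) auto
    qed
    have e1: "measure_pmf.expectation p (gI i) = measure_pmf.expectation p (\<lambda>x. measure_pmf.expectation (c x) (gI i))"
      unfolding c_def by (rule tower[OF gIB[OF i] Rr])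
    have e2: "measure_pmf.expectation p (sb i) = measure_pmf.expectation p (\<lambda>x. measure_pmf.expectation (c x) (sb i))"
      unfolding c_def by (rule tower[OF sbB[OF i] Rr])
    have int1: "integrable (measure_pmf p) (\<lambda>x. measure_pmf.expectation (c x) (gI i))"
      by (rule int_pmf[where B="2*Bf"], rule exp_bound) (use setc gIB[OF i] in auto)
    have int2: "integrable (measure_pmf p) (\<lambda>x. (1 - \<epsilon>) * measure_pmf.expectation (c x) (sb i))"
      by (intro integrable_mult_right int_pmf[where B="real (card N) * (2*Bf)"], rule exp_bound) (use setc sbB[OF i] in auto)
    have "measure_pmf.expectation p (\<lambda>x. (1 - \<epsilon>) * measure_pmf.expectation (c x) (sb i))
        \<le> measure_pmf.expectation p (\<lambda>x. measure_pmf.expectation (c x) (gI i))"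
    proof (rule integral_mono_AE[OF int2 int1], unfold AE_measure_pmf_iff, intro ballI)
      fix x assume x: "x \<in> set_pmf p"
      have "measure_pmf.expectation (c x) (sb i) = measure_pmf.expectation (c x) (\<lambda>y. real (card (S i y)) * b i x)"
      proof (rule integral_cong_AE)
        show "AE y in measure_pmf (c x). sb i y = real (card (S i y)) * b i x"
        proof (unfold AE_measure_pmf_iff, intro ballI)
          fix y assume "y \<in> set_pmf (c x)"
          then have "R x y" using setc[OF x] by auto
          then have "pref_union S (i - 1) y = pref_union S (i - 1) x" by (rule Ueq)
          then show "sb i y = real (card (S i y)) * b i x" unfolding sb_def b_def by simp
        qed
      qed auto
      also have "\<dots> = measure_pmf.expectation (c x) (\<lambda>y. real (card (S i y))) * b i x" by simp
      finally have "(1 - \<epsilon>) * measure_pmf.expectation (c x) (sb i) =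
          (1 - \<epsilon>) * measure_pmf.expectation (c x) (\<lambda>y. real (card (S i y))) * b i x" by simp
      also have "\<dots> \<le> measure_pmf.expectation (c x) (gI i)"
        using a_exp[OF i x] unfolding c_def hist gI_def b_def by simp
      finally show "(1 - \<epsilon>) * measure_pmf.expectation (c x) (sb i) \<le> measure_pmf.expectation (c x) (gI i)" .
    qed
    then show "measure_pmf.expectation p (gI i) \<ge> (1 - \<epsilon>) * measure_pmf.expectation p (sb i)"
      using e1 e2 by simp
  qed
  have F2: "\<And>\<omega>. \<omega> \<in> set_pmf p \<Longrightarrow> f (pref_union I k \<omega>) \<ge> (\<Sum>i=1..k. gI i \<omega>)"
  proof -
    fix \<omega> assume w: "\<omega> \<in> set_pmf p"
    have "f (pref_union I k \<omega>) = (\<Sum>i=1..k. marg f (pref_union I (i - 1) \<omega>) (I i \<omega>))"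
      by (rule telescope) (use f_norm in \<open>simp add: normalized_def\<close>)
    also have "\<dots> \<ge> (\<Sum>i=1..k. gI i \<omega>)"
    proof (rule sum_mono)
      fix i assume i: "i \<in> {1..k}"
      have "i - 1 \<le> k" using i by auto
      then have Y: "pref_union S (i - 1) \<omega> \<subseteq> N" using UN[OF _ w] by blast
      show "gI i \<omega> \<le> marg f (pref_union I (i - 1) \<omega>) (I i \<omega>)"
        unfolding gI_def
      proof (rule dimret[OF f_sub _ Y])
        show "pref_union I (i - 1) \<omega> \<subseteq> pref_union S (i - 1) \<omega>" using VU[OF _ w] \<open>i - 1 \<le> k\<close> by blast
        show "I i \<omega> \<subseteq> N" using IS[OF i w] SN[OF i w] by auto
        show "I i \<omega> \<inter> pref_union S (i - 1) \<omega> = {}"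
          using IS[OF i w] SN[OF i w] sub_span[OF Y, of Ind] by auto
      qed
    qed
    finally show "f (pref_union I k \<omega>) \<ge> (\<Sum>i=1..k. gI i \<omega>)" .
  qed
  have F3: "\<And>\<omega>. \<omega> \<in> set_pmf p \<Longrightarrow> f (pref_union S k \<omega>) \<le> (\<Sum>i=1..k. sb i \<omega>)"
  proof -
    fix \<omega> assume w: "\<omega> \<in> set_pmf p"
    have "f (pref_union S k \<omega>) = (\<Sum>i=1..k. marg f (pref_union S (i - 1) \<omega>) (S i \<omega>))"
      by (rule telescope) (use f_norm in \<open>simp add: normalized_def\<close>)
    also have "\<dots> \<le> (\<Sum>i=1..k. sb i \<omega>)"
    proof (rule sum_mono)
      fix i assume i: "i \<in> {1..k}"
      have "i - 1 \<le> k" using i by auto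
      then have Y: "pref_union S (i - 1) \<omega> \<subseteq> N" using UN[OF _ w] by blast
      show "marg f (pref_union S (i - 1) \<omega>) (S i \<omega>) \<le> sb i \<omega>"
        unfolding sb_def b_def by (rule marg_le_best[OF M f_sub Y SN[OF i w]])
    qed
    finally show "f (pref_union S k \<omega>) \<le> (\<Sum>i=1..k. sb i \<omega>)" .
  qed
  have intV: "integrable (measure_pmf p) (\<lambda>\<omega>. f (pref_union I k \<omega>))"
    by (rule int_pmf[where B=Bf], rule fB, rule subset_trans[OF VU UN]) auto
  have intU: "integrable (measure_pmf p) (\<lambda>\<omega>. f (pref_union S k \<omega>))"
    by (rule int_pmf[where B=Bf], rule fB, rule UN) auto
  have intgI: "\<And>i. i \<in> {1..k} \<Longrightarrow> integrable (measure_pmf p) (gI i)"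
    by (rule int_pmf, rule gIB)
  have intsb: "\<And>i. i \<in> {1..k} \<Longrightarrow> integrable (measure_pmf p) (sb i)"
    by (rule int_pmf, rule sbB)
  have intSsb: "integrable (measure_pmf p) (\<lambda>\<omega>. \<Sum>i=1..k. sb i \<omega>)"
    by (rule Bochner_Integration.integrable_sum) (rule intsb)
  have EV: "measure_pmf.expectation p (\<lambda>\<omega>. f (pref_union I k \<omega>))
      \<ge> (1 - \<epsilon>) * measure_pmf.expectation p (\<lambda>\<omega>. \<Sum>i=1..k. sb i \<omega>)"
  proof -
    have "(1 - \<epsilon>) * measure_pmf.expectation p (\<lambda>\<omega>. \<Sum>i=1..k. sb i \<omega>)
        = (\<Sum>i=1..k. (1 - \<epsilon>) * measure_pmf.expectation p (sb i))"
      using intsb by (simp add: Bochner_Integration.integral_sum sum_distrib_left)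
    also have "\<dots> \<le> (\<Sum>i=1..k. measure_pmf.expectation p (gI i))"
      by (rule sum_mono) (use K in auto)
    also have "\<dots> = measure_pmf.expectation p (\<lambda>\<omega>. \<Sum>i=1..k. gI i \<omega>)"
      using intgI by (simp add: Bochner_Integration.integral_sum)
    also have "\<dots> \<le> measure_pmf.expectation p (\<lambda>\<omega>. f (pref_union I k \<omega>))"
      using intV F2 by (intro integral_mono_AE Bochner_Integration.integrable_sum intgI) (auto simp: AE_measure_pmf_iff)
    finally show ?thesis .
  qed
  have part1: "measure_pmf.expectation p (\<lambda>\<omega>. f (pref_union I k \<omega>))
           \<ge> (1 - \<epsilon>) * measure_pmf.expectation p (\<lambda>\<omega>. f (pref_union S k \<omega>))"
  proof -
    have "measure_pmf.expectation p (\<lambda>\<omega>. f (pref_union S k \<omega>)) \<le> measure_pmf.expectation p (\<lambda>\<omega>. \<Sum>i=1..k. sb i \<omega>)"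
      using intU intSsb F3 by (intro integral_mono_AE) (auto simp: AE_measure_pmf_iff)
    then have "(1 - \<epsilon>) * measure_pmf.expectation p (\<lambda>\<omega>. f (pref_union S k \<omega>)) \<le>
       (1 - \<epsilon>) * measure_pmf.expectation p (\<lambda>\<omega>. \<Sum>i=1..k. sb i \<omega>)"
      using eps by (intro mult_left_mono) auto
    then show ?thesis using EV by simp
  qed
  have part2: "\<forall>T \<in> Ind. \<exists>Tp :: nat \<Rightarrow> 'a set list \<Rightarrow> 'a set.
           (\<forall>\<omega> \<in> set_pmf p.
              let Ts = (\<lambda>i. Tp i (map (\<lambda>j. S j \<omega>) [1..<k+1])) in
              (\<Union>i\<in>{1..k+1}. Ts i) = T \<and> disjoint_family_on Ts {1..k+1} \<and>
              (\<forall>i\<in>{1..k+1}. Ts i \<inter> mspan N Ind (pref_union S (i - 1) \<omega>) = {})) \<and>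
           measure_pmf.expectation p (\<lambda>\<omega>. f (pref_union I k \<omega>))
             \<ge> (1 - \<epsilon>) * (\<Sum>i=1..k+1. measure_pmf.expectation p
                   (\<lambda>\<omega>. marg f (pref_union S (i - 1) \<omega>) (Tp i (map (\<lambda>j. S j \<omega>) [1..<k+1]))))
               - (1 - \<epsilon>) * \<beta>"
  proof
    fix T assume T: "T \<in> Ind"
    have TsubN: "T \<subseteq> N" using TN[OF T] .
    define pu where "pu = (\<lambda>(xs::'a set list) j. \<Union> (set (take j xs)))"
    define Tp where "Tp = (\<lambda>i xs. (if i = k+1 then T else T \<inter> mspan N Ind (pu xs i))
                                     - (\<Union>j\<in>{..<i}. mspan N Ind (pu xs j)))"
    define xs where "xs = (\<lambda>\<omega>. map (\<lambda>j. S j \<omega>) [1..<k+1])"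
    define W where "W = (\<lambda>\<omega> j. mspan N Ind (pref_union S j \<omega>))"
    have pu_eq: "\<And>j \<omega>. j \<le> k \<Longrightarrow> pu (xs \<omega>) j = pref_union S j \<omega>"
    proof -
      fix j \<omega> assume j: "j \<le> k"
      have "take j [1..<k+1] = [1..<1+j]" by (rule take_upt) (use j in linarith)
      have "set (take j (xs \<omega>)) = (\<lambda>j. S j \<omega>) ` set (take j [1..<k+1])"
        unfolding xs_def take_map set_map ..
      also have "\<dots> = (\<lambda>j. S j \<omega>) ` {1..j}"
        unfolding \<open>take j [1..<k+1] = [1..<1+j]\<close> set_upt by (intro arg_cong[where f="image _"]) auto
      finally have "set (take j (xs \<omega>)) = (\<lambda>j. S j \<omega>) ` {1..j}" .
      then show "pu (xs \<omega>) j = pref_union S j \<omega>" unfolding pu_def pref_union_def by simp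
    qed
    have Ts_eq: "\<And>\<omega> i. i \<le> k+1 \<Longrightarrow> Tp i (xs \<omega>) =
        (if i = k+1 then T else T \<inter> W \<omega> i) - (\<Union>j\<in>{..<i}. W \<omega> j)"
    proof -
      fix \<omega> i assume i: "i \<le> k+1"
      have "(\<Union>j\<in>{..<i}. mspan N Ind (pu (xs \<omega>) j)) = (\<Union>j\<in>{..<i}. W \<omega> j)"
      proof (rule SUP_cong[OF refl])
        fix j assume "j \<in> {..<i}"
        then have "j \<le> k" using i by auto
        then show "mspan N Ind (pu (xs \<omega>) j) = W \<omega> j" unfolding W_def by (simp add: pu_eq)
      qed
      moreover have "i \<noteq> k+1 \<Longrightarrow> mspan N Ind (pu (xs \<omega>) i) = W \<omega> i"
        using i pu_eq unfolding W_def by simp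
      ultimately show "Tp i (xs \<omega>) = (if i = k+1 then T else T \<inter> W \<omega> i) - (\<Union>j\<in>{..<i}. W \<omega> j)"
        unfolding Tp_def by auto
    qed
    have Wmono: "\<And>\<omega> i j. i \<le> j \<Longrightarrow> W \<omega> i \<subseteq> W \<omega> j"
      unfolding W_def using span_mono[OF M] Umono by blast
    have W0: "\<And>\<omega> x. x \<in> T \<Longrightarrow> x \<notin> W \<omega> 0"
      unfolding W_def using loop_free[OF M T] by simp
    have TsT: "\<And>\<omega> i. Tp i (xs \<omega>) \<subseteq> T" unfolding Tp_def by auto
    have TsW: "\<And>\<omega> i. i \<le> k \<Longrightarrow> Tp i (xs \<omega>) \<subseteq> W \<omega> i" using Ts_eq by auto
    have TsD: "\<And>\<omega> i j. i \<le> k+1 \<Longrightarrow> j < i \<Longrightarrow> Tp i (xs \<omega>) \<inter> W \<omega> j = {}" using Ts_eq by auto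
    have pdisj: "\<And>\<omega> i j. i \<in> {1..k+1} \<Longrightarrow> j \<in> {1..k+1} \<Longrightarrow> i \<noteq> j \<Longrightarrow> Tp i (xs \<omega>) \<inter> Tp j (xs \<omega>) = {}"
    proof -
      fix \<omega> i j assume ij: "i \<in> {1..k+1}" "j \<in> {1..k+1}" "i \<noteq> j"
      have *: "Tp a (xs \<omega>) \<inter> Tp c (xs \<omega>) = {}" if "a < c" "c \<le> k+1" for a c
        using TsW[of a \<omega>] TsD[of c a \<omega>] that by auto
      show "Tp i (xs \<omega>) \<inter> Tp j (xs \<omega>) = {}"
        using ij *[of i j] *[of j i] by (cases "i < j") (auto simp: Int_commute)
    qed
    have cover: "\<And>\<omega>. (\<Union>i\<in>{1..k+1}. Tp i (xs \<omega>)) = T"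
    proof
      fix \<omega>
      show "(\<Union>i\<in>{1..k+1}. Tp i (xs \<omega>)) \<subseteq> T"
      proof (rule UN_least)
        fix i assume "i \<in> {1..k+1}"
        then show "Tp i (xs \<omega>) \<subseteq> T" using TsT by simp
      qed
      show "T \<subseteq> (\<Union>i\<in>{1..k+1}. Tp i (xs \<omega>))"
      proof
        fix x assume x: "x \<in> T"
        show "x \<in> (\<Union>i\<in>{1..k+1}. Tp i (xs \<omega>))"
        proof (cases "\<exists>j. j \<le> k \<and> x \<in> W \<omega> j")
          case True
          define i where "i = (LEAST j. j \<le> k \<and> x \<in> W \<omega> j)"
          have i1: "i \<le> k \<and> x \<in> W \<omega> i" unfolding i_def using True by (metis (mono_tags, lifting) LeastI)
          have i2: "\<And>j. j < i \<Longrightarrow> x \<notin> W \<omega> j"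
          proof -
            fix j assume ji: "j < i"
            then have "\<not> (j \<le> k \<and> x \<in> W \<omega> j)" unfolding i_def by (rule not_less_Least)
            then show "x \<notin> W \<omega> j" using ji i1 by auto
          qed
          have "i \<noteq> 0" using i1 W0[OF x, of \<omega>] by (metis)
          then have "i \<in> {1..k+1}" using i1 by auto
          moreover have "x \<in> Tp i (xs \<omega>)" using Ts_eq[of i \<omega>] i1 i2 x by auto
          ultimately show ?thesis by blast
        next
          case False
          then have "x \<in> Tp (k+1) (xs \<omega>)" using Ts_eq[of "k+1" \<omega>] x by auto
          then show ?thesis by auto
        qed
      qed
    qed
    define m where "m = (\<lambda>i \<omega>. marg f (pref_union S (i - 1) \<omega>) (Tp i (xs \<omega>)))"
    have mB: "\<And>i \<omega>. i \<in> {1..k+1} \<Longrightarrow> \<omega> \<in> set_pmf p \<Longrightarrow> \<bar>m i \<omega>\<bar> \<le> 2 * Bf"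
    proof -
      fix i \<omega> assume a: "i \<in> {1..k+1}" "\<omega> \<in> set_pmf p"
      have "i - 1 \<le> k" using a(1) by auto
      then have "pref_union S (i - 1) \<omega> \<subseteq> N" using UN[OF _ a(2)] by blast
      moreover have "Tp i (xs \<omega>) \<subseteq> N" using TsT[of i \<omega>] a(1) TsubN by auto
      ultimately show "\<bar>m i \<omega>\<bar> \<le> 2 * Bf" unfolding m_def by (rule margB)
    qed
    have intm: "\<And>i. i \<in> {1..k+1} \<Longrightarrow> integrable (measure_pmf p) (m i)"
      by (rule int_pmf, rule mB)
    have F5: "\<And>\<omega>. \<omega> \<in> set_pmf p \<Longrightarrow> m (k+1) \<omega> \<le> \<beta>"
    proof -
      fix \<omega> assume w: "\<omega> \<in> set_pmf p"
      have ind: "Tp (k+1) (xs \<omega>) \<in> Ind" using indep_sub[OF M T TsT[of "k+1" \<omega>]] by simp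
      have "Tp (k+1) (xs \<omega>) - mspan N Ind (pref_union S k \<omega>) = Tp (k+1) (xs \<omega>)"
        using TsD[of "k+1" k \<omega>] unfolding W_def by auto
      then show "m (k+1) \<omega> \<le> \<beta>" using b[OF w ind] unfolding m_def by simp
    qed
    have F4: "\<And>\<omega>. \<omega> \<in> set_pmf p \<Longrightarrow> (\<Sum>i=1..k. m i \<omega>) \<le> (\<Sum>i=1..k. sb i \<omega>)"
    proof -
      fix \<omega> assume w: "\<omega> \<in> set_pmf p"
      have "(\<Sum>i=1..k. m i \<omega>) \<le> (\<Sum>i=1..k. real (card (Tp i (xs \<omega>))) * b i \<omega>)"
      proof (rule sum_mono)
        fix i assume i: "i \<in> {1..k}"
        have "i - 1 \<le> k" using i by auto
        then have Y: "pref_union S (i - 1) \<omega> \<subseteq> N" using UN[OF _ w] by blast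
        have "Tp i (xs \<omega>) \<subseteq> N - mspan N Ind (pref_union S (i - 1) \<omega>)"
          using TsT[of i \<omega>] TsD[of i "i - 1" \<omega>] i TsubN unfolding W_def by auto
        then show "m i \<omega> \<le> real (card (Tp i (xs \<omega>))) * b i \<omega>"
          unfolding m_def b_def by (rule marg_le_best[OF M f_sub Y])
      qed
      also have "\<dots> \<le> (\<Sum>i=1..k. real (card (S i \<omega>)) * b i \<omega>)"
      proof (rule abel)
        fix m' assume m': "m' \<le> k"
        have fT: "\<And>i. finite (Tp i (xs \<omega>))"
        proof -
          fix i have "Tp i (xs \<omega>) \<subseteq> N" using TsubN unfolding Tp_def by auto
          then show "finite (Tp i (xs \<omega>))" using finN by (rule finite_subset)
        qed
        have "(\<Sum>i=1..m'. card (Tp i (xs \<omega>))) = card (\<Union>i\<in>{1..m'}. Tp i (xs \<omega>))"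
          by (rule card_UN_disjoint[symmetric]) (use fT pdisj m' in auto)
        also have "\<dots> \<le> mrank Ind (pref_union S m' \<omega>)"
        proof (rule indep_in_span[OF M])
          show "(\<Union>i\<in>{1..m'}. Tp i (xs \<omega>)) \<in> Ind"
            by (rule indep_sub[OF M T]) (use TsT m' in auto)
          show "(\<Union>i\<in>{1..m'}. Tp i (xs \<omega>)) \<subseteq> mspan N Ind (pref_union S m' \<omega>)"
          proof (rule UN_least)
            fix i assume "i \<in> {1..m'}"
            then show "Tp i (xs \<omega>) \<subseteq> mspan N Ind (pref_union S m' \<omega>)"
              using TsW[of i \<omega>] Wmono[of i m' \<omega>] m' unfolding W_def by auto
          qed
        qed
        also have "\<dots> \<le> card (pref_union S m' \<omega>)"
          by (rule mrank_le_card[OF M finite_subset[OF UN[OF m' w] finN]])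
        also have "\<dots> \<le> (\<Sum>i=1..m'. card (S i \<omega>))"
          unfolding pref_union_def by (rule card_UN_le) simp
        finally show "(\<Sum>i=1..m'. real (card (Tp i (xs \<omega>)))) \<le> (\<Sum>i=1..m'. real (card (S i \<omega>)))"
          by (simp only: of_nat_sum[symmetric] of_nat_le_iff)
      next
        fix i assume i: "1 \<le> i" "i < k"
        have Y: "pref_union S i \<omega> \<subseteq> N" using UN[OF _ w] i by auto
        have "best_marg N Ind f (pref_union S i \<omega>) \<le> best_marg N Ind f (pref_union S (i - 1) \<omega>)"
          by (rule best_mono[OF M f_sub Umono Y]) simp
        then show "b (Suc i) \<omega> \<le> b i \<omega>" unfolding b_def by simp
      next
        fix i show "0 \<le> b i \<omega>" unfolding b_def by (rule best_ge0[OF M])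
      qed
      finally show "(\<Sum>i=1..k. m i \<omega>) \<le> (\<Sum>i=1..k. sb i \<omega>)" unfolding sb_def .
    qed
    have Em: "(\<Sum>i=1..k. measure_pmf.expectation p (m i)) \<le> measure_pmf.expectation p (\<lambda>\<omega>. \<Sum>i=1..k. sb i \<omega>)"
    proof -
      have "(\<Sum>i=1..k. measure_pmf.expectation p (m i)) = measure_pmf.expectation p (\<lambda>\<omega>. \<Sum>i=1..k. m i \<omega>)"
        by (rule Bochner_Integration.integral_sum[symmetric]) (rule intm, auto)
      also have "\<dots> \<le> measure_pmf.expectation p (\<lambda>\<omega>. \<Sum>i=1..k. sb i \<omega>)"
      proof (rule integral_mono_AE[OF _ intSsb])
        show "integrable (measure_pmf p) (\<lambda>\<omega>. \<Sum>i=1..k. m i \<omega>)"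
          by (rule Bochner_Integration.integrable_sum) (rule intm, auto)
        show "AE x in measure_pmf p. (\<Sum>i=1..k. m i x) \<le> (\<Sum>i=1..k. sb i x)"
          using F4 by (simp add: AE_measure_pmf_iff)
      qed
      finally show ?thesis .
    qed
    have ik: "k+1 \<in> {1..k+1}" by simp
    have Emk: "measure_pmf.expectation p (m (k+1)) \<le> \<beta>"
    proof -
      have "measure_pmf.expectation p (m (k+1)) \<le> measure_pmf.expectation p (\<lambda>_. \<beta>)"
        by (rule integral_mono_AE[OF intm[OF ik]], simp, unfold AE_measure_pmf_iff, intro ballI F5)
      then show ?thesis by simp
    qed
    have sumeq: "(\<Sum>i=1..k+1. measure_pmf.expectation p (m i)) =
        (\<Sum>i=1..k. measure_pmf.expectation p (m i)) + measure_pmf.expectation p (m (k+1))"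
      by simp
    define A where "A = (\<Sum>i=1..k. measure_pmf.expectation p (m i))"
    define c where "c = measure_pmf.expectation p (m (k+1))"
    have h1: "(1 - \<epsilon>) * A \<le> (1 - \<epsilon>) * measure_pmf.expectation p (\<lambda>\<omega>. \<Sum>i=1..k. sb i \<omega>)"
      using Em eps unfolding A_def by (intro mult_left_mono) auto
    have h2: "(1 - \<epsilon>) * c \<le> (1 - \<epsilon>) * \<beta>"
      using Emk eps unfolding c_def by (intro mult_left_mono) auto
    have h3: "(1 - \<epsilon>) * (A + c) - (1 - \<epsilon>) * \<beta> = (1 - \<epsilon>) * A + ((1 - \<epsilon>) * c - (1 - \<epsilon>) * \<beta>)"
      by (simp add: algebra_simps)
    have fin: "measure_pmf.expectation p (\<lambda>\<omega>. f (pref_union I k \<omega>))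
             \<ge> (1 - \<epsilon>) * (\<Sum>i=1..k+1. measure_pmf.expectation p (m i)) - (1 - \<epsilon>) * \<beta>"
      unfolding sumeq A_def[symmetric] c_def[symmetric] h3 using h1 h2 EV by linarith
    show "\<exists>Tp :: nat \<Rightarrow> 'a set list \<Rightarrow> 'a set.
           (\<forall>\<omega> \<in> set_pmf p.
              let Ts = (\<lambda>i. Tp i (map (\<lambda>j. S j \<omega>) [1..<k+1])) in
              (\<Union>i\<in>{1..k+1}. Ts i) = T \<and> disjoint_family_on Ts {1..k+1} \<and>
              (\<forall>i\<in>{1..k+1}. Ts i \<inter> mspan N Ind (pref_union S (i - 1) \<omega>) = {})) \<and>
           measure_pmf.expectation p (\<lambda>\<omega>. f (pref_union I k \<omega>))
             \<ge> (1 - \<epsilon>) * (\<Sum>i=1..k+1. measure_pmf.expectation p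
                   (\<lambda>\<omega>. marg f (pref_union S (i - 1) \<omega>) (Tp i (map (\<lambda>j. S j \<omega>) [1..<k+1]))))
               - (1 - \<epsilon>) * \<beta>"
    proof (intro exI[of _ Tp] conjI ballI)
      fix \<omega> assume w: "\<omega> \<in> set_pmf p"
      have xe: "map (\<lambda>j. S j \<omega>) [1..<k+1] = xs \<omega>" by (simp add: xs_def)
      have D: "disjoint_family_on (\<lambda>i. Tp i (xs \<omega>)) {1..k+1}"
        unfolding disjoint_family_on_def using pdisj by blast
      have Sp: "\<forall>i\<in>{1..k+1}. Tp i (xs \<omega>) \<inter> mspan N Ind (pref_union S (i - 1) \<omega>) = {}"
      proof
        fix i assume "i \<in> {1..k+1}"
        then show "Tp i (xs \<omega>) \<inter> mspan N Ind (pref_union S (i - 1) \<omega>) = {}"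
          using TsD[of i "i - 1" \<omega>] unfolding W_def by auto
      qed
      show "let Ts = (\<lambda>i. Tp i (map (\<lambda>j. S j \<omega>) [1..<k+1])) in
              (\<Union>i\<in>{1..k+1}. Ts i) = T \<and> disjoint_family_on Ts {1..k+1} \<and>
              (\<forall>i\<in>{1..k+1}. Ts i \<inter> mspan N Ind (pref_union S (i - 1) \<omega>) = {})"
        unfolding Let_def xe using cover[of \<omega>] D Sp by blast
    next
      show "measure_pmf.expectation p (\<lambda>\<omega>. f (pref_union I k \<omega>))
             \<ge> (1 - \<epsilon>) * (\<Sum>i=1..k+1. measure_pmf.expectation p
                   (\<lambda>\<omega>. marg f (pref_union S (i - 1) \<omega>) (Tp i (map (\<lambda>j. S j \<omega>) [1..<k+1]))))
               - (1 - \<epsilon>) * \<beta>"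
        using fin unfolding m_def xs_def .
    qed
  qed
  show ?thesis using part1 part2 by blast
qed

end
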